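(* Under Strategy 1 (described in the context), the expected number of uncles created during an attack cycle and eventually referred is $$\mathbb{E}[U]=q+\frac{q^3\gamma}{p-q}-\frac{p^3}{p-q}\Bigl(\frac qp\Bigr)^{n_1+1}\gamma-q^{n_1+1}(1-\gamma).$$
   Context: Honest hashrate $p$, attacker hashrate $q$, $p+q=1$, $0<q<p$; $\gamma\in[0,1]$ is the fraction of honest hashrate mining on the attacker's block during a public competition between equal-height blocks. Each new block is the attacker's with probability $q$, independently. Attack cycles are i.i.d. words in S (attacker block) and H (honest block): H, SHS, SHH, or SSwH with $w$ a Dyck word; $\mathbb{P}[H]=p$, $\mathbb{P}[SHS]=pq^2$, $\mathbb{P}[SHH]=p^2q$, $\mathbb{P}[SSwH]=q^2p(pq)^{|w|}$. Ethereum rules: an uncle is a non-official block whose parent is official; a nephew (official block) may refer an uncle at distance (height difference) at most $n_1$ ($n_1\ge2$ an integer). Strategy 1: the attacker withholds his blocks, and each time the honest miners publish a block he publishes the part of his secret fork of the same height as the public honest chain (creating a competition, in which a fraction $\gamma$ of honest hashrate mines on the attacker's branch); the attacker's fork wins in cycles starting with SS; all miners refer all possible uncles. $U(\omega)$ is the number of uncles created during cycle $\omega$ that are referred by nephews in $\omega$ or in a later cycle. *)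

theory Defs
  imports "HOL-Analysis.Analysis"
begin

text \<open>
Encoding: a block event is a bool, True = S (attacker block), False = H (honest block). Each honest block additionally carries a flag
(True = it was mined by the gamma-fraction of honest hashrate, i.e. on the attacker's
branch when a public competition is ongoing); the j-th honest block of the cycle
(j = 1, 2, ...) has flag  g ! (j - 1).
\<close>

inductive dyck :: "bool list \<Rightarrow> bool" where
  dyck_Nil: "dyck []"
| dyck_step: "dyck u \<Longrightarrow> dyck v \<Longrightarrow> dyck (True # u @ False # v)"

definition nS :: "bool list \<Rightarrow> nat" where
  "nS w = length (filter (\<lambda>x. x) w)"

definition nH :: "bool list \<Rightarrow> nat" where
  "nH w = length (filter (\<lambda>x. \<not> x) w)"

definition is_cycle :: "bool list \<Rightarrow> bool" where
  "is_cycle \<omega> \<longleftrightarrow> \<omega> = [False] \<or> \<omega> = [True, False, True] \<or> \<omega> = [True, False, False]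
     \<or> (\<exists>w. dyck w \<and> \<omega> = True # True # w @ [False])"

definition cycle_prob :: "real \<Rightarrow> real \<Rightarrow> bool list \<Rightarrow> real" where
  "cycle_prob p q \<omega> = q ^ nS \<omega> * p ^ nH \<omega>"

definition flags_prob :: "real \<Rightarrow> bool list \<Rightarrow> real" where
  "flags_prob \<gamma> g = (\<Prod>b\<leftarrow>g. if b then \<gamma> else 1 - \<gamma>)"

definition cycle_outcomes :: "(bool list \<times> bool list) set" where
  "cycle_outcomes = {(\<omega>, g). is_cycle \<omega> \<and> length g = nH \<omega>}"

text \<open>Blocks: Base is the official block at the start of the cycle (height 0);
  Blk b h is the attacker's (b = True) or honest (b = False) block of the cycle at
  height h (heights relative to the start of the cycle).\<close>
datatype blk = Base | Blk bool nat

fun blk_height :: "blk \<Rightarrow> nat" where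
  "blk_height Base = 0"
| "blk_height (Blk b h) = h"

definition cycle_blocks :: "bool list \<Rightarrow> blk set" where
  "cycle_blocks \<omega> = {Blk True h | h. 1 \<le> h \<and> h \<le> nS \<omega>} \<union> {Blk False h | h. 1 \<le> h \<and> h \<le> nH \<omega>}"

text \<open>Parent of a block under Strategy 1: the attacker mines on his own fork; the honest
  block at height h \<ge> 2 is mined during a competition at height h-1, on the attacker's
  block if it is mined by the gamma-fraction, otherwise on the honest block.\<close>
fun blk_parent :: "bool list \<Rightarrow> blk \<Rightarrow> blk" where
  "blk_parent g Base = Base"
| "blk_parent g (Blk True h) = (if h \<le> 1 then Base else Blk True (h - 1))"
| "blk_parent g (Blk False h) = (if h \<le> 1 then Base else Blk (g ! (h - 1)) (h - 1))"

fun mined_time :: "bool list \<Rightarrow> blk \<Rightarrow> nat" where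
  "mined_time \<omega> Base = 0"
| "mined_time \<omega> (Blk b h) =
     (LEAST i. i < length \<omega> \<and> \<omega> ! i = b \<and> length (filter (\<lambda>x. x = b) (take (Suc i) \<omega>)) = h)"

text \<open>Time at which a block is published: honest blocks immediately; the attacker's block
  of height h when the honest block of the same height is published, otherwise at the
  end of the cycle.\<close>
fun pub_time :: "bool list \<Rightarrow> blk \<Rightarrow> nat" where
  "pub_time \<omega> Base = 0"
| "pub_time \<omega> (Blk False h) = mined_time \<omega> (Blk False h)"
| "pub_time \<omega> (Blk True h) =
     (if h \<le> nH \<omega> then mined_time \<omega> (Blk False h) else length \<omega> - 1)"

definition win_tip :: "bool list \<Rightarrow> blk" where
  "win_tip \<omega> = (if nH \<omega> < nS \<omega> then Blk True (nS \<omega>) else Blk False (nH \<omega>))"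

definition official :: "bool list \<Rightarrow> bool list \<Rightarrow> blk \<Rightarrow> bool" where
  "official \<omega> g b \<longleftrightarrow> (win_tip \<omega>, b) \<in> {(x, blk_parent g x) | x. True}\<^sup>*"

definition is_uncle :: "bool list \<Rightarrow> bool list \<Rightarrow> blk \<Rightarrow> bool" where
  "is_uncle \<omega> g b \<longleftrightarrow> b \<in> cycle_blocks \<omega> \<and> \<not> official \<omega> g b \<and> official \<omega> g (blk_parent g b)"

text \<open>An uncle is referred if some official block mined after its publication and at
  height difference 1..n1 refers it: either an official block of the cycle, or an official
  block of a later cycle (later cycles provide official blocks, all mined after the end
  of this cycle, at every height above the winning tip).\<close>
definition is_referred :: "nat \<Rightarrow> bool list \<Rightarrow> bool list \<Rightarrow> blk \<Rightarrow> bool" where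
  "is_referred n1 \<omega> g b \<longleftrightarrow> is_uncle \<omega> g b \<and>
     ((\<exists>k \<in> cycle_blocks \<omega>. official \<omega> g k \<and> pub_time \<omega> b < mined_time \<omega> k
          \<and> blk_height b < blk_height k \<and> blk_height k \<le> blk_height b + n1)
      \<or> blk_height (win_tip \<omega>) + 1 \<le> blk_height b + n1)"

definition uncles_referred :: "nat \<Rightarrow> bool list \<Rightarrow> bool list \<Rightarrow> nat" where
  "uncles_referred n1 \<omega> g = card {b \<in> cycle_blocks \<omega>. is_referred n1 \<omega> g b}"

end

theory Submission
  imports Defs
begin


definition cnt :: "bool \<Rightarrow> bool list \<Rightarrow> nat" where
  "cnt b xs = length (filter (\<lambda>x. x = b) xs)"

lemma nS_cnt: "nS w = cnt True w" by (simp add: nS_def cnt_def)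
lemma nH_cnt: "nH w = cnt False w" by (simp add: nH_def cnt_def)

lemma cnt_take_Suc: "i < length w \<Longrightarrow> cnt b (take (Suc i) w) = cnt b (take i w) + (if w!i = b then 1 else 0)"
  by (simp add: cnt_def take_Suc_conv_app_nth)

lemma cnt_take_mono: "i \<le> j \<Longrightarrow> cnt b (take i w) \<le> cnt b (take j w)"
proof (induction j)
  case 0 then show ?case by simp
next
  case (Suc j)
  show ?case
  proof (cases "i = Suc j")
    case False
    then have "cnt b (take i w) \<le> cnt b (take j w)" using Suc by simp
    also have "\<dots> \<le> cnt b (take (Suc j) w)"
      by (cases "j < length w") (simp_all add: cnt_take_Suc)
    finally show ?thesis .
  qed simp
qed

lemma cnt_take_le: "cnt b (take i w) \<le> cnt b w"
  by (simp add: cnt_def) (metis length_filter_le take_all_iff cnt_def cnt_take_mono linorder_le_cases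
     nle_le)

lemma exists_pos: "1 \<le> h \<Longrightarrow> h \<le> cnt b w \<Longrightarrow> \<exists>i<length w. w!i = b \<and> cnt b (take (Suc i) w) = h"
proof (induction w rule: rev_induct)
  case Nil then show ?case by (simp add: cnt_def)
next
  case (snoc x w)
  show ?case
  proof (cases "h \<le> cnt b w")
    case True
    then obtain i where "i < length w" "w!i = b" "cnt b (take (Suc i) w) = h" using snoc by auto
    then show ?thesis by (intro exI[of _ i]) (auto simp: nth_append)
  next
    case False
    then have "x = b" "h = Suc (cnt b w)" using snoc.prems by (auto simp: cnt_def split: if_splits)
    then show ?thesis by (intro exI[of _ "length w"]) (auto simp: cnt_def)
  qed
qed

lemma unique_pos:
  assumes "i < length w" "j < length w" "w!i = b" "w!j = b"
    "cnt b (take (Suc i) w) = cnt b (take (Suc j) w)"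
  shows "i = j"
proof (rule ccontr)
  assume ne: "i \<noteq> j"
  have lt: "cnt b (take (Suc a) w) < cnt b (take (Suc c) w)" if "a < c" "c < length w" "w!c = b" for a c
  proof -
    have "cnt b (take (Suc a) w) \<le> cnt b (take c w)" using that cnt_take_mono by simp
    also have "\<dots> < cnt b (take (Suc c) w)" using that by (simp add: cnt_take_Suc)
    finally show ?thesis .
  qed
  from ne have "i < j \<or> j < i" by arith
  then show False using lt assms by fastforce
qed

lemma mined_time_cnt: "mined_time w (Blk b h) = (LEAST i. i < length w \<and> w ! i = b \<and> cnt b (take (Suc i) w) = h)"
  by (simp add: cnt_def)

lemma mined_time_eq:
  assumes "i < length w" "w!i = b" "cnt b (take (Suc i) w) = h"
  shows "mined_time w (Blk b h) = i"
  unfolding mined_time_cnt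
proof (rule Least_equality)
  show "i < length w \<and> w ! i = b \<and> cnt b (take (Suc i) w) = h" using assms by simp
next
  fix y assume "y < length w \<and> w ! y = b \<and> cnt b (take (Suc y) w) = h"
  then have "y = i" using assms unique_pos[of y w i b] by auto
  then show "i \<le> y" by simp
qed

lemma mined_time_prop:
  assumes "1 \<le> h" "h \<le> cnt b w"
  shows "mined_time w (Blk b h) < length w \<and> w ! (mined_time w (Blk b h)) = b
     \<and> cnt b (take (Suc (mined_time w (Blk b h))) w) = h"
proof -
  obtain i where "i<length w" "w!i = b" "cnt b (take (Suc i) w) = h" using exists_pos[OF assms] by blast
  moreover then have "mined_time w (Blk b h) = i" by (rule mined_time_eq)
  ultimately show ?thesis by simp
qed

lemma rtr_fun: "(x, y) \<in> {(x, f x) | x. True}\<^sup>* \<longleftrightarrow> (\<exists>n. y = (f ^^ n) x)"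
proof
  assume "(x, y) \<in> {(x, f x) | x. True}\<^sup>*"
  then show "\<exists>n. y = (f ^^ n) x"
  proof (induction rule: rtrancl_induct)
    case base then show ?case by (intro exI[of _ 0]) simp
  next
    case (step y z)
    then obtain n where "y = (f ^^ n) x" by blast
    with step show ?case by (intro exI[of _ "Suc n"]) auto
  qed
next
  assume "\<exists>n. y = (f ^^ n) x"
  then obtain n where y: "y = (f ^^ n) x" by blast
  have "(x, (f ^^ n) x) \<in> {(x, f x) | x. True}\<^sup>*"
    by (induction n) (auto intro: rtrancl_into_rtrancl)
  then show "(x, y) \<in> {(x, f x) | x. True}\<^sup>*" using y by simp
qed

lemma official_iff: "official \<omega> g b \<longleftrightarrow> (\<exists>n. b = (blk_parent g ^^ n) (win_tip \<omega>))"
  unfolding official_def rtr_fun ..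

lemma parent_pow_T: "1 \<le> N \<Longrightarrow> (blk_parent g ^^ n) (Blk True N) = (if n < N then Blk True (N - n) else Base)"
  by (induction n) auto

lemma official_AW:
  assumes "nH \<omega> < nS \<omega>"
  shows "official \<omega> g b \<longleftrightarrow> b = Base \<or> (\<exists>j. b = Blk True j \<and> 1 \<le> j \<and> j \<le> nS \<omega>)"
proof -
  have wt: "win_tip \<omega> = Blk True (nS \<omega>)" using assms by (simp add: win_tip_def)
  have "1 \<le> nS \<omega>" using assms by simp
  show ?thesis
    unfolding official_iff wt parent_pow_T[OF \<open>1 \<le> nS \<omega>\<close>]
  proof
    assume "\<exists>n. b = (if n < nS \<omega> then Blk True (nS \<omega> - n) else Base)"
    then show "b = Base \<or> (\<exists>j. b = Blk True j \<and> 1 \<le> j \<and> j \<le> nS \<omega>)"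
      by (auto split: if_splits)
  next
    assume "b = Base \<or> (\<exists>j. b = Blk True j \<and> 1 \<le> j \<and> j \<le> nS \<omega>)"
    then show "\<exists>n. b = (if n < nS \<omega> then Blk True (nS \<omega> - n) else Base)"
    proof
      assume "b = Base" then show ?thesis by (intro exI[of _ "nS \<omega>"]) simp
    next
      assume "\<exists>j. b = Blk True j \<and> 1 \<le> j \<and> j \<le> nS \<omega>"
      then obtain j where "b = Blk True j" "1 \<le> j" "j \<le> nS \<omega>" by blast
      then show ?thesis by (intro exI[of _ "nS \<omega> - j"]) auto
    qed
  qed
qed

lemma later_iff:
  assumes "1 \<le> j" "j \<le> cnt True w" "t < length w" "w!t = False"
  shows "t < mined_time w (Blk True j) \<longleftrightarrow> cnt True (take (Suc t) w) < j"
proof -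
  define s where "s = mined_time w (Blk True j)"
  have s: "s < length w" "w!s = True" "cnt True (take (Suc s) w) = j"
    using mined_time_prop[OF assms(1,2)] unfolding s_def by auto
  show ?thesis unfolding s_def[symmetric]
  proof
    assume "t < s"
    then have "cnt True (take (Suc t) w) \<le> cnt True (take s w)" by (intro cnt_take_mono) simp
    also have "\<dots> < j" using s by (simp add: cnt_take_Suc)
    finally show "cnt True (take (Suc t) w) < j" .
  next
    assume a: "cnt True (take (Suc t) w) < j"
    show "t < s"
    proof (rule ccontr)
      assume "\<not> t < s"
      then have "cnt True (take (Suc s) w) \<le> cnt True (take (Suc t) w)" by (intro cnt_take_mono) simp
      with s a show False by simp
    qed
  qed
qed




lemma uncle_AW:
  assumes "nH \<omega> < nS \<omega>" "1 \<le> h" "h \<le> nH \<omega>"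
  shows "is_uncle \<omega> g (Blk False h) \<longleftrightarrow> (h = 1 \<or> g!(h-1))"
proof -
  have cb: "Blk False h \<in> cycle_blocks \<omega>" using assms by (simp add: cycle_blocks_def)
  have no: "\<not> official \<omega> g (Blk False h)" using official_AW[OF assms(1)] by simp
  have "official \<omega> g (blk_parent g (Blk False h)) \<longleftrightarrow> (h = 1 \<or> g!(h-1))"
    using assms by (auto simp: official_AW[OF assms(1)])
  then show ?thesis using cb no by (simp add: is_uncle_def)
qed

lemma referred_F_AW:
  assumes "nH \<omega> < nS \<omega>" "1 \<le> h" "h \<le> nH \<omega>" "1 \<le> n1"
  shows "is_referred n1 \<omega> g (Blk False h) \<longleftrightarrow> (h = 1 \<or> g!(h-1)) \<and>
     cnt True (take (Suc (mined_time \<omega> (Blk False h))) \<omega>) < h + n1"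
proof -
  define t where "t = mined_time \<omega> (Blk False h)"
  define a where "a = cnt True (take (Suc t) \<omega>)"
  have t: "t < length \<omega>" "\<omega>!t = False"
    using mined_time_prop[of h False \<omega>] assms unfolding t_def nH_cnt by auto
  have aS: "a \<le> nS \<omega>" unfolding a_def nS_cnt by (rule cnt_take_le)
  have ex: "(\<exists>k \<in> cycle_blocks \<omega>. official \<omega> g k \<and> pub_time \<omega> (Blk False h) < mined_time \<omega> k
          \<and> blk_height (Blk False h) < blk_height k \<and> blk_height k \<le> blk_height (Blk False h) + n1)
       \<longleftrightarrow> (\<exists>j. 1 \<le> j \<and> j \<le> nS \<omega> \<and> a < j \<and> h < j \<and> j \<le> h + n1)"
  proof
    assume "\<exists>k \<in> cycle_blocks \<omega>. official \<omega> g k \<and> pub_time \<omega> (Blk False h) < mined_time \<omega> k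
          \<and> blk_height (Blk False h) < blk_height k \<and> blk_height k \<le> blk_height (Blk False h) + n1"
    then obtain k where k: "k \<in> cycle_blocks \<omega>" "official \<omega> g k" "t < mined_time \<omega> k"
      "h < blk_height k" "blk_height k \<le> h + n1" by (auto simp: t_def)
    then obtain j where j: "k = Blk True j" "1 \<le> j" "j \<le> nS \<omega>"
      using official_AW[OF assms(1)] by (auto simp: cycle_blocks_def)
    have "a < j" using k j later_iff[of j \<omega> t] t unfolding a_def nS_cnt by auto
    moreover have "h < j" "j \<le> h + n1" using j(1) k(4,5) by auto
    ultimately show "\<exists>j. 1 \<le> j \<and> j \<le> nS \<omega> \<and> a < j \<and> h < j \<and> j \<le> h + n1" using j(2,3) by blast
  next
    assume "\<exists>j. 1 \<le> j \<and> j \<le> nS \<omega> \<and> a < j \<and> h < j \<and> j \<le> h + n1"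
    then obtain j where j: "1 \<le> j" "j \<le> nS \<omega>" "a < j" "h < j" "j \<le> h + n1" by blast
    have "t < mined_time \<omega> (Blk True j)" using j later_iff[of j \<omega> t] t unfolding a_def nS_cnt by auto
    moreover have "Blk True j \<in> cycle_blocks \<omega>" using j by (simp add: cycle_blocks_def)
    moreover have "official \<omega> g (Blk True j)" using j official_AW[OF assms(1)] by simp
    ultimately show "\<exists>k \<in> cycle_blocks \<omega>. official \<omega> g k \<and> pub_time \<omega> (Blk False h) < mined_time \<omega> k
          \<and> blk_height (Blk False h) < blk_height k \<and> blk_height k \<le> blk_height (Blk False h) + n1"
      using j by (intro bexI[of _ "Blk True j"]) (auto simp: t_def)
  qed
  have wt: "blk_height (win_tip \<omega>) = nS \<omega>" using assms by (simp add: win_tip_def)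
  have arith: "((\<exists>j. 1 \<le> j \<and> j \<le> nS \<omega> \<and> a < j \<and> h < j \<and> j \<le> h + n1) \<or> nS \<omega> + 1 \<le> h + n1)
      \<longleftrightarrow> a < h + n1"
  proof
    assume "(\<exists>j. 1 \<le> j \<and> j \<le> nS \<omega> \<and> a < j \<and> h < j \<and> j \<le> h + n1) \<or> nS \<omega> + 1 \<le> h + n1"
    then show "a < h + n1" using aS by auto
  next
    assume a: "a < h + n1"
    show "(\<exists>j. 1 \<le> j \<and> j \<le> nS \<omega> \<and> a < j \<and> h < j \<and> j \<le> h + n1) \<or> nS \<omega> + 1 \<le> h + n1"
    proof (cases "a < h")
      case True then show ?thesis using assms by (intro disjI1 exI[of _ "h+1"]) auto
    next
      case False
      show ?thesis
      proof (cases "a < nS \<omega>")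
        case True then show ?thesis using False a by (intro disjI1 exI[of _ "a+1"]) auto
      next
        case False then show ?thesis using a aS by auto
      qed
    qed
  qed
  show ?thesis
    unfolding is_referred_def uncle_AW[OF assms(1-3)] ex wt
    using arith unfolding a_def t_def by simp
qed

lemma referred_set_AW:
  assumes "nH \<omega> < nS \<omega>" "1 \<le> n1"
  shows "{b \<in> cycle_blocks \<omega>. is_referred n1 \<omega> g b} = Blk False ` {h \<in> {1..nH \<omega>}. (h = 1 \<or> g!(h-1)) \<and>
     cnt True (take (Suc (mined_time \<omega> (Blk False h))) \<omega>) < h + n1}"
proof -
  have T: "\<not> is_referred n1 \<omega> g (Blk True j)" if "1 \<le> j" "j \<le> nS \<omega>" for j
    using that official_AW[OF assms(1)] by (simp add: is_referred_def is_uncle_def)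
  show ?thesis
  proof (intro set_eqI iffI)
    fix b assume "b \<in> {b \<in> cycle_blocks \<omega>. is_referred n1 \<omega> g b}"
    then show "b \<in> Blk False ` {h \<in> {1..nH \<omega>}. (h = 1 \<or> g!(h-1)) \<and>
     cnt True (take (Suc (mined_time \<omega> (Blk False h))) \<omega>) < h + n1}"
      using T referred_F_AW[OF assms(1) _ _ assms(2)] by (auto simp: cycle_blocks_def)
  next
    fix b assume "b \<in> Blk False ` {h \<in> {1..nH \<omega>}. (h = 1 \<or> g!(h-1)) \<and>
     cnt True (take (Suc (mined_time \<omega> (Blk False h))) \<omega>) < h + n1}"
    then show "b \<in> {b \<in> cycle_blocks \<omega>. is_referred n1 \<omega> g b}"
      using referred_F_AW[OF assms(1) _ _ assms(2)] by (auto simp: cycle_blocks_def)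
  qed
qed

lemma uncles_referred_AW:
  assumes "nH \<omega> < nS \<omega>" "1 \<le> n1"
  shows "uncles_referred n1 \<omega> g = card {h \<in> {1..nH \<omega>}. (h = 1 \<or> g!(h-1)) \<and>
     cnt True (take (Suc (mined_time \<omega> (Blk False h))) \<omega>) < h + n1}"
  unfolding uncles_referred_def referred_set_AW[OF assms]
  by (rule card_image) (simp add: inj_on_def)




lemma lists_Suc: "{g::bool list. length g = Suc n} = (\<lambda>(b,g). b#g) ` (UNIV \<times> {g. length g = n})"
  by (auto simp: length_Suc_conv)

lemma finite_lists_len: "finite {g::bool list. length g = n}"
  using finite_lists_length_eq[of "UNIV::bool set" n] by simp

lemma sum_lists_Suc:
  "(\<Sum>g | length g = Suc n. f g) = (\<Sum>g | length g = n. f (True#g) + f (False#g))"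
proof -
  have "(\<Sum>g | length g = Suc n. f g) = (\<Sum>x\<in>UNIV \<times> {g::bool list. length g = n}. f (fst x # snd x))"
    unfolding lists_Suc
    by (subst sum.reindex) (auto simp: inj_on_def case_prod_beta intro!: sum.cong)
  also have "\<dots> = (\<Sum>b\<in>UNIV. \<Sum>g | length g = n. f (b # g))"
    unfolding sum.cartesian_product by (simp add: case_prod_beta)
  also have "\<dots> = (\<Sum>g | length g = n. f (True#g) + f (False#g))"
    by (simp add: UNIV_bool sum.distrib add.commute)
  finally show ?thesis .
qed

lemma flags_prob_Cons: "flags_prob \<gamma> (b#g) = (if b then \<gamma> else 1 - \<gamma>) * flags_prob \<gamma> g"
  by (simp add: flags_prob_def)

lemma flags_prob_nonneg: "0 \<le> \<gamma> \<Longrightarrow> \<gamma> \<le> 1 \<Longrightarrow> 0 \<le> flags_prob \<gamma> g"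
  by (induction g) (auto simp: flags_prob_def)

lemma FP1: "(\<Sum>g | length g = n. flags_prob \<gamma> g) = 1"
proof (induction n)
  case 0 then show ?case by (simp add: flags_prob_def)
next
  case (Suc n)
  then show ?case by (simp add: sum_lists_Suc flags_prob_Cons algebra_simps sum.distrib
        flip: sum_distrib_left)
qed

lemma FP2: "i < n \<Longrightarrow> (\<Sum>g | length g = n. flags_prob \<gamma> g * (if g!i then 1 else 0)) = \<gamma>"
proof (induction n arbitrary: i)
  case 0 then show ?case by simp
next
  case (Suc n)
  show ?case
  proof (cases i)
    case 0 then show ?thesis by (simp add: sum_lists_Suc flags_prob_Cons FP1 flip: sum_distrib_left)
  next
    case (Suc i')
    then have "i' < n" using Suc.prems by simp
    then show ?thesis using Suc.IH[of i'] \<open>i = Suc i'\<close>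
      by (simp add: sum_lists_Suc flags_prob_Cons algebra_simps sum.distrib flip: sum_distrib_left)
  qed
qed

lemma flag_sum:
  fixes R :: "nat \<Rightarrow> bool"
  shows "(\<Sum>g | length g = N. flags_prob \<gamma> g * real (card {h \<in> {1..N}. (h = 1 \<or> g!(h-1)) \<and> R h}))
    = (\<Sum>h\<in>{1..N}. if R h then (if h = 1 then 1 else \<gamma>) else 0)"
proof -
  have c: "real (card {h \<in> {1..N}. (h = 1 \<or> g!(h-1)) \<and> R h})
       = (\<Sum>h\<in>{1..N}. if (h = 1 \<or> g!(h-1)) \<and> R h then 1 else 0)" for g :: "bool list"
    by (simp add: sum.inter_filter[symmetric])
  have "(\<Sum>g | length g = N. flags_prob \<gamma> g * real (card {h \<in> {1..N}. (h = 1 \<or> g!(h-1)) \<and> R h}))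
     = (\<Sum>h\<in>{1..N}. \<Sum>g | length g = N. flags_prob \<gamma> g * (if (h = 1 \<or> g!(h-1)) \<and> R h then 1 else 0))"
    unfolding c sum_distrib_left by (rule sum.swap)
  also have "\<dots> = (\<Sum>h\<in>{1..N}. if R h then (if h = 1 then 1 else \<gamma>) else 0)"
  proof (rule sum.cong)
    fix h assume h: "h \<in> {1..N}"
    show "(\<Sum>g | length g = N. flags_prob \<gamma> g * (if (h = 1 \<or> g!(h-1)) \<and> R h then 1 else 0))
       = (if R h then (if h = 1 then 1 else \<gamma>) else 0)"
    proof (cases "R h")
      case True
      show ?thesis
      proof (cases "h = 1")
        case True then show ?thesis using \<open>R h\<close> FP1 by simp
      next
        case False
        then have "h - 1 < N" using h by auto
        then show ?thesis using FP2[of "h-1" N \<gamma>] False \<open>R h\<close> by simp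
      qed
    qed simp
  qed simp
  finally show ?thesis .
qed

fun cw :: "nat \<Rightarrow> real \<Rightarrow> int \<Rightarrow> bool \<Rightarrow> bool list \<Rightarrow> real" where
  "cw n1 \<gamma> l b [] = 0"
| "cw n1 \<gamma> l b (True # w) = cw n1 \<gamma> (l + 1) b w"
| "cw n1 \<gamma> l b (False # w) = (if l - 1 < int n1 then (if b then 1 else \<gamma>) else 0) + cw n1 \<gamma> (l - 1) False w"

lemma cnt_Cons: "cnt b (x # xs) = (if x = b then 1 else 0) + cnt b xs"
  by (simp add: cnt_def)

lemma cnt_Nil[simp]: "cnt b [] = 0" by (simp add: cnt_def)

lemma cnt_take_pos: "i < length w \<Longrightarrow> w!i = b \<Longrightarrow> 1 \<le> cnt b (take (Suc i) w)"
  by (simp add: cnt_take_Suc)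

lemma cw_pos: "cw n1 \<gamma> l b w = (\<Sum>i<length w. if w!i = False \<and>
     l + int (cnt True (take (Suc i) w)) - int (cnt False (take (Suc i) w)) < int n1
     then (if b \<and> cnt False (take (Suc i) w) = 1 then 1 else \<gamma>) else 0)"
proof (induction w arbitrary: l b)
  case Nil then show ?case by simp
next
  case (Cons x w)
  show ?case
  proof (cases x)
    case True
    then have x: "x = True" by simp
    show ?thesis using Cons.IH[of "l+1" b]
      unfolding x length_Cons sum.lessThan_Suc_shift take_Suc_Cons cnt_Cons by (simp add: algebra_simps cong: if_cong)
  next
    case False
    have "cw n1 \<gamma> (l - 1) False w = (\<Sum>i<length w. if w!i = False \<and>
     l + int (cnt True (take (Suc (Suc i)) (x#w))) - int (cnt False (take (Suc (Suc i)) (x#w))) < int n1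
     then (if b \<and> cnt False (take (Suc (Suc i)) (x#w)) = 1 then 1 else \<gamma>) else 0)"
      unfolding Cons.IH
    proof (rule sum.cong)
      fix i assume i: "i \<in> {..<length w}"
      show "(if w!i = False \<and>
         l - 1 + int (cnt True (take (Suc i) w)) - int (cnt False (take (Suc i) w)) < int n1
         then (if False \<and> cnt False (take (Suc i) w) = 1 then 1 else \<gamma>) else 0) =
        (if w!i = False \<and>
         l + int (cnt True (take (Suc (Suc i)) (x#w))) - int (cnt False (take (Suc (Suc i)) (x#w))) < int n1
         then (if b \<and> cnt False (take (Suc (Suc i)) (x#w)) = 1 then 1 else \<gamma>) else 0)"
      proof (cases "w!i = False")
        case True
        then have "1 \<le> cnt False (take (Suc i) w)" using i cnt_take_pos[of i w False] by simp
        then show ?thesis using \<open>\<not> x\<close> by (simp add: cnt_Cons algebra_simps)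
      qed simp
    qed simp
    then show ?thesis using False
      unfolding length_Cons sum.lessThan_Suc_shift by (simp add: cnt_Cons algebra_simps cong: if_cong)
  qed
qed

lemma sum_h_pos:
  "(\<Sum>h\<in>{1..cnt False w}. F h (cnt True (take (Suc (mined_time w (Blk False h))) w)))
   = (\<Sum>i<length w. if w!i = False then F (cnt False (take (Suc i) w)) (cnt True (take (Suc i) w)) else 0)"
proof -
  have "(\<Sum>i<length w. if w!i = False then F (cnt False (take (Suc i) w)) (cnt True (take (Suc i) w)) else 0)
     = (\<Sum>i\<in>{i. i<length w \<and> w!i = False}. F (cnt False (take (Suc i) w)) (cnt True (take (Suc i) w)))"
    by (simp add: sum.inter_filter[symmetric] lessThan_def conj_commute)
  also have "\<dots> = (\<Sum>h\<in>{1..cnt False w}. F h (cnt True (take (Suc (mined_time w (Blk False h))) w)))"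
  proof -
    have H1: "\<forall>i\<in>{i. i < length w \<and> w ! i = False}. mined_time w (Blk False (cnt False (take (Suc i) w))) = i"
      by (auto simp del: mined_time.simps intro!: mined_time_eq)
    have H2: "\<forall>i\<in>{i. i < length w \<and> w ! i = False}. cnt False (take (Suc i) w) \<in> {1..cnt False w}"
      using cnt_take_pos[of _ w False] cnt_take_le[of False _ w] by auto
    have H34: "\<forall>h\<in>{1..cnt False w}. cnt False (take (Suc (mined_time w (Blk False h))) w) = h \<and>
       mined_time w (Blk False h) \<in> {i. i < length w \<and> w ! i = False}"
      using mined_time_prop[of _ False w] by auto
    show ?thesis
      by (rule sum.reindex_bij_witness[where i = "\<lambda>h. mined_time w (Blk False h)"
        and j = "\<lambda>i. cnt False (take (Suc i) w)"]) (use H1 H2 H34 in auto)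
  qed
  finally show ?thesis by simp
qed

lemma V_AW:
  assumes "nH \<omega> < nS \<omega>" "1 \<le> n1"
  shows "(\<Sum>g | length g = nH \<omega>. flags_prob \<gamma> g * real (uncles_referred n1 \<omega> g)) = cw n1 \<gamma> 0 True \<omega>"
proof -
  have "(\<Sum>g | length g = nH \<omega>. flags_prob \<gamma> g * real (uncles_referred n1 \<omega> g))
    = (\<Sum>h\<in>{1..cnt False \<omega>}. (\<lambda>h a. if a < h + n1 then (if h = 1 then 1 else \<gamma>) else 0) h
         (cnt True (take (Suc (mined_time \<omega> (Blk False h))) \<omega>)))"
    unfolding uncles_referred_AW[OF assms] flag_sum nH_cnt by simp
  also have "\<dots> = (\<Sum>i<length \<omega>. if \<omega>!i = False then (\<lambda>h a. if a < h + n1 then (if h = 1 then 1 else \<gamma>) else 0)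
      (cnt False (take (Suc i) \<omega>)) (cnt True (take (Suc i) \<omega>)) else 0)"
    by (rule sum_h_pos)
  also have "\<dots> = cw n1 \<gamma> 0 True \<omega>"
    unfolding cw_pos by (intro sum.cong) auto
  finally show ?thesis .
qed




fun cntF :: "nat \<Rightarrow> int \<Rightarrow> bool list \<Rightarrow> real" where
  "cntF n1 l [] = 0"
| "cntF n1 l (True # w) = cntF n1 (l + 1) w"
| "cntF n1 l (False # w) = (if l - 1 < int n1 then 1 else 0) + cntF n1 (l - 1) w"

fun fF :: "nat \<Rightarrow> int \<Rightarrow> bool list \<Rightarrow> real" where
  "fF n1 l [] = 0"
| "fF n1 l (True # w) = fF n1 (l + 1) w"
| "fF n1 l (False # w) = (if l - 1 < int n1 then 1 else 0)"

lemma cw_False: "cw n1 \<gamma> l False w = \<gamma> * cntF n1 l w"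
proof (induction w arbitrary: l)
  case (Cons x w) then show ?case by (cases x) (auto simp: algebra_simps)
qed simp

lemma cw_True: "cw n1 \<gamma> l True w = \<gamma> * cntF n1 l w + (1 - \<gamma>) * fF n1 l w"
proof (induction w arbitrary: l)
  case (Cons x w) then show ?case by (cases x) (auto simp: algebra_simps cw_False)
qed simp

lemma cntF_nonneg: "0 \<le> cntF n1 l w"
proof (induction w arbitrary: l)
  case (Cons x w) then show ?case by (cases x) (auto intro: add_nonneg_nonneg)
qed simp

lemma fF_nonneg: "0 \<le> fF n1 l w"
proof (induction w arbitrary: l)
  case (Cons x w) then show ?case by (cases x) auto
qed simp

lemma fF_le1: "fF n1 l w \<le> 1"
proof (induction w arbitrary: l)
  case (Cons x w) then show ?case by (cases x) auto
qed simp

lemma cntF_app: "dyck u \<Longrightarrow> cntF n1 l (u @ x) = cntF n1 l u + cntF n1 l x"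
  by (induction u arbitrary: l x rule: dyck.induct) (simp_all add: algebra_simps)

lemma cntF_dec: "dyck u \<Longrightarrow> cntF n1 l (True # u @ False # v) =
   cntF n1 (l + 1) u + (if l < int n1 then 1 else 0) + cntF n1 l v"
  by (simp add: cntF_app)

lemma fF_app: "dyck u \<Longrightarrow> fF n1 l (u @ x) = (if u = [] then fF n1 l x else fF n1 l u)"
  by (induction u arbitrary: l x rule: dyck.induct) (simp_all add: algebra_simps)

lemma fF_dec: "dyck u \<Longrightarrow> fF n1 l (True # u @ False # v) =
   fF n1 (l + 1) u + (if u = [] then (if l < int n1 then 1 else 0) else 0)"
  by (simp add: fF_app)

lemma cntF_zero: "dyck w \<Longrightarrow> int n1 \<le> l \<Longrightarrow> cntF n1 l w = 0"
  by (induction w arbitrary: l rule: dyck.induct) (simp_all add: cntF_app)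

lemma fF_zero: "int n1 < l \<Longrightarrow> fF n1 l w = 0"
proof (induction w arbitrary: l)
  case (Cons x w) then show ?case by (cases x) auto
qed simp

lemma dyck_bal: "dyck w \<Longrightarrow> cnt True w = cnt False w"
  by (induction rule: dyck.induct) (simp_all add: cnt_def)

lemma V_TT:
  assumes "dyck w" "2 \<le> n1"
  shows "cw n1 \<gamma> 0 True (True # True # w @ [False]) =
    \<gamma> * (cntF n1 2 w + 1) + (1 - \<gamma>) * ((if w = [] then 1 else 0) + fF n1 2 w)"
proof -
  have "cntF n1 0 (True # True # w @ [False]) = cntF n1 2 w + 1"
    using assms by (simp add: cntF_app)
  moreover have "fF n1 0 (True # True # w @ [False]) = (if w = [] then 1 else 0) + fF n1 2 w"
    using assms by (simp add: fF_app)
  ultimately show ?thesis by (simp add: cw_True)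
qed

lemma cp_TT: "cycle_prob p q (True # True # w @ [False]) = q^2 * p * cycle_prob p q w"
  by (simp add: cycle_prob_def nS_def nH_def power2_eq_square)

lemma cp_dec: "cycle_prob p q (True # u @ False # v) = q * p * (cycle_prob p q u * cycle_prob p q v)"
  by (simp add: cycle_prob_def nS_def nH_def power_add)

lemma AW_TT: "dyck w \<Longrightarrow> nH (True # True # w @ [False]) < nS (True # True # w @ [False])"
  using dyck_bal[of w] by (simp add: nS_cnt nH_cnt cnt_def)




fun bal :: "bool list \<Rightarrow> int" where
  "bal [] = 0"
| "bal (x # w) = (if x then 1 else -1) + bal w"

lemma bal_app: "bal (u @ v) = bal u + bal v"
  by (induction u) auto

lemma dyck_bal0: "dyck w \<Longrightarrow> bal w = 0"
  by (induction rule: dyck.induct) (simp_all add: bal_app)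

lemma dyck_prefix: "dyck w \<Longrightarrow> 0 \<le> bal (take k w)"
proof (induction w arbitrary: k rule: dyck.induct)
  case dyck_Nil then show ?case by simp
next
  case (dyck_step u v)
  show ?case
  proof (cases k)
    case 0 then show ?thesis by simp
  next
    case (Suc k')
    show ?thesis
    proof (cases "k' \<le> length u")
      case True
      then show ?thesis using Suc dyck_step.IH(1)[of k'] by (simp add: bal_app)
    next
      case False
      then obtain m where m: "k' - length u = Suc m" by (metis Suc_diff_Suc not_le_imp_less)
      then show ?thesis using Suc False dyck_step.IH(2)[of m] dyck_bal0[OF dyck_step.hyps(1)]
        by (simp add: bal_app)
    qed
  qed
qed

definition dec :: "bool list \<Rightarrow> bool list \<Rightarrow> bool list" where
  "dec u v = True # u @ False # v"

lemma dec_inj_aux: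
  assumes "dyck u" "dyck u'" "u @ False # v = u' @ False # v'" "length u < length u'"
  shows False
proof -
  have "take (Suc (length u)) (u @ False # v) = u @ [False]" by simp
  moreover have "take (Suc (length u)) (u' @ False # v') = take (Suc (length u)) u'"
    using assms(4) by simp
  ultimately have "take (Suc (length u)) u' = u @ [False]" using assms(3) by simp
  then have "bal (take (Suc (length u)) u') = - 1" using dyck_bal0[OF assms(1)] by (simp add: bal_app)
  then show False using dyck_prefix[OF assms(2), of "Suc (length u)"] by simp
qed

lemma dec_inj:
  assumes "dyck u" "dyck u'" "dec u v = dec u' v'"
  shows "u = u' \<and> v = v'"
proof -
  have e: "u @ False # v = u' @ False # v'" using assms(3) by (simp add: dec_def)
  have "length u = length u'"
    using dec_inj_aux[OF assms(1,2) e] dec_inj_aux[OF assms(2,1) e[symmetric]] by arith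
  then show ?thesis using e by simp
qed

lemma dec_dyck: "dyck u \<Longrightarrow> dyck v \<Longrightarrow> dyck (dec u v)"
  by (simp add: dec_def dyck_step)

lemma dyck_dec_cases: "dyck w \<Longrightarrow> w \<noteq> [] \<Longrightarrow> \<exists>u v. dyck u \<and> dyck v \<and> w = dec u v"
  by (cases rule: dyck.cases) (auto simp: dec_def)

definition DD :: "bool list set" where "DD = {w. dyck w}"
definition Dn :: "nat \<Rightarrow> bool list set" where "Dn n = {w. dyck w \<and> length w < n}"

lemma DD_Nil[simp]: "[] \<in> DD" by (simp add: DD_def dyck_Nil)

lemma inj_dec: "inj_on (\<lambda>(u,v). dec u v) (DD \<times> DD)"
  by (auto simp: inj_on_def DD_def dest: dec_inj)

lemma DD_minus: "DD - {[]} = (\<lambda>(u,v). dec u v) ` (DD \<times> DD)"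
proof (intro set_eqI iffI)
  fix w assume "w \<in> DD - {[]}"
  then have "dyck w" "w \<noteq> []" by (auto simp: DD_def)
  then obtain u v where "dyck u" "dyck v" "w = dec u v" using dyck_dec_cases by blast
  then show "w \<in> (\<lambda>(u,v). dec u v) ` (DD \<times> DD)" by (auto simp: DD_def)
next
  fix w assume "w \<in> (\<lambda>(u,v). dec u v) ` (DD \<times> DD)"
  then show "w \<in> DD - {[]}" by (auto simp: DD_def dec_def dyck_step)
qed

lemma finite_Dn: "finite (Dn n)"
proof -
  have "Dn n \<subseteq> {xs. set xs \<subseteq> (UNIV::bool set) \<and> length xs \<le> n}" by (auto simp: Dn_def)
  then show ?thesis using finite_lists_length_le[of "UNIV::bool set" n] finite_subset by auto
qed

lemma Dn_sub: "Dn n \<subseteq> DD" by (auto simp: Dn_def DD_def)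

lemma finite_in_Dn: "finite F \<Longrightarrow> F \<subseteq> DD \<Longrightarrow> \<exists>n. F \<subseteq> Dn n"
proof -
  assume F: "finite F" "F \<subseteq> DD"
  have "length w < Suc (\<Sum>x\<in>F. length x)" if "w \<in> F" for w
    using member_le_sum[of w F length] F that by simp
  then show ?thesis using F by (intro exI[of _ "Suc (\<Sum>x\<in>F. length x)"]) (auto simp: Dn_def DD_def)
qed

lemma trunc:
  fixes h :: "bool list \<Rightarrow> real"
  assumes "\<And>w. w \<in> DD \<Longrightarrow> 0 \<le> h w"
  shows "sum h (Dn (Suc n)) \<le> h [] + (\<Sum>u\<in>Dn n. \<Sum>v\<in>Dn n. h (dec u v))"
proof -
  let ?I = "(\<lambda>(u,v). dec u v) ` (Dn n \<times> Dn n)"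
  have sub: "Dn (Suc n) \<subseteq> insert [] ?I"
  proof
    fix w assume w: "w \<in> Dn (Suc n)"
    show "w \<in> insert [] ?I"
    proof (cases "w = []")
      case False
      have "dyck w" using w by (auto simp: Dn_def)
      then obtain u v where "dyck u" "dyck v" "w = dec u v" using False dyck_dec_cases by blast
      then show ?thesis using w by (auto simp: Dn_def dec_def)
    qed simp
  qed
  have fin: "finite (insert [] ?I)" using finite_Dn by auto
  have nn: "\<forall>w \<in> insert [] ?I - Dn (Suc n). 0 \<le> h w"
    using assms Dn_sub by (auto simp: DD_def dec_def Dn_def dyck_step dyck_Nil)
  have "sum h (Dn (Suc n)) \<le> sum h (insert [] ?I)"
    by (rule sum_mono2[OF fin sub]) (use nn in auto)
  also have "\<dots> = h [] + sum h ?I"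
    by (subst sum.insert) (auto simp: finite_Dn dec_def)
  also have "sum h ?I = (\<Sum>x\<in>Dn n \<times> Dn n. h (case x of (u,v) \<Rightarrow> dec u v))"
    by (subst sum.reindex) (use inj_dec Dn_sub in \<open>auto intro: inj_on_subset simp: o_def\<close>)
  also have "\<dots> = (\<Sum>u\<in>Dn n. \<Sum>v\<in>Dn n. h (dec u v))"
    by (simp add: sum.cartesian_product case_prod_beta)
  finally show ?thesis by simp
qed

lemma bound_summable:
  fixes h :: "bool list \<Rightarrow> real"
  assumes "\<And>w. w \<in> DD \<Longrightarrow> 0 \<le> h w" "\<And>n. sum h (Dn n) \<le> B"
  shows "h summable_on DD" "infsum h DD \<le> B"
proof -
  have fs: "sum h F \<le> B" if F: "finite F" "F \<subseteq> DD" for F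
  proof -
    obtain n where n: "F \<subseteq> Dn n" using finite_in_Dn[OF F] by blast
    have "sum h F \<le> sum h (Dn n)"
      by (rule sum_mono2[OF finite_Dn n]) (meson Diff_iff Dn_sub assms(1) subsetD)
    also have "\<dots> \<le> B" by (rule assms(2))
    finally show ?thesis .
  qed
  have bdd: "bdd_above (sum h ` {F. F \<subseteq> DD \<and> finite F})"
    by (rule bdd_aboveI[of _ B]) (use fs in blast)
  show s: "h summable_on DD"
    by (rule nonneg_bdd_above_summable_on[OF _ bdd]) (rule assms(1))
  show "infsum h DD \<le> B"
    by (rule infsum_le_finite_sums[OF s]) (rule fs)
qed

lemma decomp:
  fixes h :: "bool list \<Rightarrow> real"
  assumes "h summable_on DD"
  shows "((\<lambda>(u,v). h (dec u v)) has_sum (infsum h DD - h [])) (DD \<times> DD)"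
proof -
  have s1: "h summable_on (DD - {[]})" using assms by (rule summable_on_subset_banach) auto
  have "(h has_sum (h [] + infsum h (DD - {[]}))) (insert [] (DD - {[]}))"
    by (rule has_sum_insert) (use s1 in auto)
  then have "(h has_sum (h [] + infsum h (DD - {[]}))) DD" by (simp add: insert_absorb)
  then have eq: "infsum h (DD - {[]}) = infsum h DD - h []" using infsumI by fastforce
  have "(h has_sum (infsum h DD - h [])) (DD - {[]})" using s1 eq by (metis has_sum_infsum)
  then have "(h has_sum (infsum h DD - h [])) ((\<lambda>(u,v). dec u v) ` (DD \<times> DD))" by (simp add: DD_minus)
  then have "((h \<circ> (\<lambda>(u,v). dec u v)) has_sum (infsum h DD - h [])) (DD \<times> DD)"
    using has_sum_reindex[OF inj_dec] by blast
  then show ?thesis by (simp add: o_def split_def)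
qed

lemma has_sum_prod:
  fixes f g :: "'a \<Rightarrow> real"
  assumes "(f has_sum a) A" "(g has_sum b) B" "\<And>x. x \<in> A \<Longrightarrow> 0 \<le> f x" "\<And>x. x \<in> B \<Longrightarrow> 0 \<le> g x"
  shows "((\<lambda>(x,y). f x * g y) has_sum (a * b)) (A \<times> B)"
proof -
  have inner: "((\<lambda>y. (\<lambda>(x,y). f x * g y) (x, y)) has_sum (f x * b)) B" if "x \<in> A" for x
    using has_sum_cmult_right[OF assms(2), of "f x"] by simp
  have outer: "((\<lambda>x. f x * b) has_sum (a * b)) A"
    using has_sum_cmult_left[OF assms(1), of b] by simp
  have summ: "(\<lambda>(x,y). f x * g y) summable_on (A \<times> B)"
    by (rule summable_on_SigmaI[OF inner]) (use outer assms(3,4) in \<open>auto simp: summable_on_def\<close>)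
  show ?thesis by (rule has_sum_SigmaI[OF inner outer summ])
qed




lemma lin_decomp3:
  fixes h f1 g1 f2 g2 f3 g3 :: "bool list \<Rightarrow> real"
  assumes "h summable_on DD"
   "(f1 has_sum a1) DD" "(g1 has_sum b1) DD" "(f2 has_sum a2) DD" "(g2 has_sum b2) DD"
   "(f3 has_sum a3) DD" "(g3 has_sum b3) DD"
   "\<And>u. u \<in> DD \<Longrightarrow> 0 \<le> f1 u \<and> 0 \<le> g1 u \<and> 0 \<le> f2 u \<and> 0 \<le> g2 u \<and> 0 \<le> f3 u \<and> 0 \<le> g3 u"
   "\<And>u v. u \<in> DD \<Longrightarrow> v \<in> DD \<Longrightarrow> h (dec u v) = f1 u * g1 v + f2 u * g2 v + f3 u * g3 v"
  shows "infsum h DD - h [] = a1*b1 + a2*b2 + a3*b3"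
proof -
  have p1: "((\<lambda>(x,y). f1 x * g1 y) has_sum (a1*b1)) (DD \<times> DD)"
    by (rule has_sum_prod) (use assms in auto)
  have p2: "((\<lambda>(x,y). f2 x * g2 y) has_sum (a2*b2)) (DD \<times> DD)"
    by (rule has_sum_prod) (use assms in auto)
  have p3: "((\<lambda>(x,y). f3 x * g3 y) has_sum (a3*b3)) (DD \<times> DD)"
    by (rule has_sum_prod) (use assms in auto)
  have "((\<lambda>z. (\<lambda>(x,y). f1 x * g1 y) z + (\<lambda>(x,y). f2 x * g2 y) z + (\<lambda>(x,y). f3 x * g3 y) z)
     has_sum (a1*b1 + a2*b2 + a3*b3)) (DD \<times> DD)"
    by (intro has_sum_add p1 p2 p3)
  then have "((\<lambda>(u,v). h (dec u v)) has_sum (a1*b1 + a2*b2 + a3*b3)) (DD \<times> DD)"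
    by (rule has_sum_cong[THEN iffD1, rotated]) (use assms(9) in auto)
  then show ?thesis using decomp[OF assms(1)] has_sum_unique by blast
qed

lemma has_sum_Nil_ind: "((\<lambda>u. if u = [] then c else 0) has_sum (c::real)) DD"
  by (rule has_sum_finite_neutralI[of "{[]}"]) auto

lemma sum3: "(\<Sum>u\<in>A. \<Sum>v\<in>A. f1 u * g1 v + f2 u * g2 v + f3 u * (g3 v::real))
   = sum f1 A * sum g1 A + sum f2 A * sum g2 A + sum f3 A * sum g3 A"
  by (simp add: sum.distrib sum_product)

lemma alg1:
  fixes K p q r x :: real
  assumes "K*(p-q) = q/p" "p*r = q" "p + q = 1"
  shows "q*(K*(1-x)) + q/p + q*(K*(1-r*x)) = K*(1-r*x)"
proof -
  have "K*(1-r*x) - q*(K*(1-r*x)) = (p+q)*(K*(1-r*x)) - q*(K*(1-r*x))" using assms(3) by simp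
  also have "\<dots> = p*K - (p*r)*K*x" by (simp add: algebra_simps)
  also have "\<dots> = p*K - q*K*x" using assms(2) by simp
  also have "\<dots> = q*(K*(1-x)) + K*(p-q)" by (simp add: algebra_simps)
  also have "\<dots> = q*(K*(1-x)) + q/p" using assms(1) by simp
  finally show ?thesis by simp
qed

lemma alg2:
  fixes p q y :: real
  assumes "p \<noteq> 0" "p + q = 1"
  shows "q*(q*(1-y)/p) + q = q*(1-q*y)/p"
proof -
  have "q*(q*(1-y)/p) + q = (q*q*(1-y) + q*p)/p" using assms(1) by (simp add: field_simps)
  also have "q*q*(1-y) + q*p = q*(p+q) - q*(q*y)" by (simp add: algebra_simps)
  also have "\<dots> = q*(1-q*y)" using assms(2) by (simp add: algebra_simps)
  finally show ?thesis .
qed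

definition cI :: "nat \<Rightarrow> int \<Rightarrow> real" where "cI n1 l = (if l < int n1 then 1 else 0)"
definition Sv :: "real \<Rightarrow> real \<Rightarrow> nat \<Rightarrow> int \<Rightarrow> real" where
  "Sv p q n1 l = q / (p * (p - q)) * (1 - (q/p) ^ nat (int n1 - l))"
definition Ev :: "real \<Rightarrow> real \<Rightarrow> nat \<Rightarrow> int \<Rightarrow> real" where
  "Ev p q n1 l = q * (1 - q ^ nat (int n1 - l)) / p"

context
  fixes p q :: real and n1 :: nat
  assumes pq: "0 < q" "q < p" "p + q = 1"
begin

abbreviation "P \<equiv> cycle_prob p q"

lemma P_nonneg: "0 \<le> P w"
  using pq by (simp add: cycle_prob_def)

lemma P_Nil: "P [] = 1" by (simp add: cycle_prob_def nS_def nH_def)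

lemma P_dec: "P (dec u v) = q * p * (P u * P v)"
  by (simp add: dec_def cp_dec)

lemma Dn0: "Dn 0 = {}" by (simp add: Dn_def)

lemma sumP_bound: "sum P (Dn n) \<le> 1/p"
proof (induction n)
  case 0 then show ?case using pq by (simp add: Dn0)
next
  case (Suc n)
  have "sum P (Dn (Suc n)) \<le> P [] + (\<Sum>u\<in>Dn n. \<Sum>v\<in>Dn n. P (dec u v))"
    by (rule trunc) (rule P_nonneg)
  also have "\<dots> = 1 + q * p * (sum P (Dn n) * sum P (Dn n))"
    by (subst sum_product) (simp add: P_Nil P_dec sum_distrib_left)
  also have "\<dots> \<le> 1 + q * p * ((1/p) * (1/p))"
    using Suc pq by (intro add_left_mono mult_left_mono mult_mono) (auto intro: sum_nonneg P_nonneg)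
  also have "\<dots> = 1/p" using pq by (simp add: field_simps)
  finally show ?case .
qed

lemma P_summable: "P summable_on DD" and P_infsum_le: "infsum P DD \<le> 1/p"
  using bound_summable[of P "1/p"] P_nonneg sumP_bound by auto

lemma P_has_sum: "(P has_sum 1/p) DD"
proof -
  define C where "C = infsum P DD"
  have hC: "(P has_sum C) DD" using P_summable C_def by (simp add: has_sum_infsum)
  have C0: "0 \<le> C" using hC P_nonneg has_sum_nonneg by blast
  have "infsum P DD - P [] = (q*p*C) * C + 0 * 0 + 0 * 0"
    by (rule lin_decomp3[OF P_summable has_sum_cmult_right[OF hC] hC has_sum_0 has_sum_0 has_sum_0 has_sum_0])
       (use pq P_nonneg in \<open>auto simp: P_dec\<close>)
  then have eq: "C - 1 = q*p*C*C" by (simp add: C_def P_Nil)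
  have "(p*C - 1) * (q*C - 1) = p*q*C*C - (p+q)*C + 1" by (simp add: algebra_simps)
  also have "\<dots> = 0" using eq pq(3) by (simp add: algebra_simps)
  finally have "(p*C - 1) * (q*C - 1) = 0" .
  moreover have "q * C - 1 \<noteq> 0"
  proof
    assume "q * C - 1 = 0"
    then have "C = 1/q" using pq by (simp add: field_simps)
    moreover have "1/p < 1/q" using pq by (simp add: frac_less2)
    ultimately show False using P_infsum_le C_def by simp
  qed
  ultimately have "p*C - 1 = 0" by simp
  then have "C = 1/p" using pq by (simp add: field_simps)
  then show ?thesis using hC by simp
qed

lemma Sv_nonneg: "0 \<le> Sv p q n1 l"
proof -
  have "(q/p) ^ nat (int n1 - l) \<le> 1" using pq by (intro power_le_one) auto
  then show ?thesis using pq unfolding Sv_def by (intro mult_nonneg_nonneg) auto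
qed

lemma Sv_rec: "q * Sv p q n1 (l+1) + q * cI n1 l / p + q * Sv p q n1 l = Sv p q n1 l"
proof (cases "l < int n1")
  case True
  define m where "m = nat (int n1 - (l+1))"
  have m: "nat (int n1 - l) = Suc m" using True unfolding m_def by arith
  have pmq: "p - q \<noteq> 0" "p \<noteq> 0" using pq by auto
  have "q * (q / (p * (p - q)) * (1 - (q/p)^m)) + q / p + q * (q / (p * (p - q)) * (1 - (q/p) * (q/p)^m))
     = q / (p * (p - q)) * (1 - (q/p) * (q/p)^m)"
    by (rule alg1) (use pmq pq in auto)
  then show ?thesis using True unfolding Sv_def cI_def m m_def by simp
next
  case False
  then have "nat (int n1 - l) = 0" "nat (int n1 - (l+1)) = 0" by auto
  then show ?thesis using False unfolding Sv_def cI_def by simp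
qed

lemma Ev_rec: "q * Ev p q n1 (l+1) + q * cI n1 l = Ev p q n1 l"
proof (cases "l < int n1")
  case True
  define m where "m = nat (int n1 - (l+1))"
  have m: "nat (int n1 - l) = Suc m" using True unfolding m_def by arith
  have "q * (q * (1 - q ^ m) / p) + q = q * (1 - q * q ^ m) / p"
    by (rule alg2) (use pq in auto)
  then show ?thesis using True unfolding Ev_def cI_def m m_def by simp
next
  case False
  then have "nat (int n1 - l) = 0" "nat (int n1 - (l+1)) = 0" by auto
  then show ?thesis using False unfolding Ev_def cI_def by simp
qed

lemma S_bound: "sum (\<lambda>w. P w * cntF n1 l w) (Dn n) \<le> Sv p q n1 l"
proof (induction n arbitrary: l)
  case 0 then show ?case using Sv_nonneg by (simp add: Dn0)
next
  case (Suc n)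
  define Cn where "Cn = sum P (Dn n)"
  define A where "A = (\<lambda>l. sum (\<lambda>w. P w * cntF n1 l w) (Dn n))"
  have Cn: "0 \<le> Cn" "Cn \<le> 1/p" unfolding Cn_def using sumP_bound P_nonneg by (auto intro: sum_nonneg)
  have A: "0 \<le> A l" "A l \<le> Sv p q n1 l" for l
    unfolding A_def using Suc P_nonneg cntF_nonneg by (auto intro!: sum_nonneg)
  have "sum (\<lambda>w. P w * cntF n1 l w) (Dn (Suc n)) \<le> P [] * cntF n1 l [] +
     (\<Sum>u\<in>Dn n. \<Sum>v\<in>Dn n. P (dec u v) * cntF n1 l (dec u v))"
    by (rule trunc) (simp add: P_nonneg cntF_nonneg)
  also have "\<dots> = (\<Sum>u\<in>Dn n. \<Sum>v\<in>Dn n. P (dec u v) * cntF n1 l (dec u v))" by simp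
  also have "\<dots> = (\<Sum>u\<in>Dn n. \<Sum>v\<in>Dn n. (q*p*(P u * cntF n1 (l+1) u)) * P v + (q*p*cI n1 l*P u) * P v
      + (q*p*P u) * (P v * cntF n1 l v))"
    by (intro sum.cong refl) (auto simp: Dn_def dec_def cntF_app P_dec[unfolded dec_def] cI_def algebra_simps)
  also have "\<dots> = q*p*(A (l+1) * Cn + cI n1 l * Cn * Cn + Cn * A l)"
    unfolding sum3 A_def Cn_def by (simp add: sum_distrib_left algebra_simps)
  also have "\<dots> \<le> q*p*(Sv p q n1 (l+1) * (1/p) + cI n1 l * (1/p) * (1/p) + (1/p) * Sv p q n1 l)"
    using pq A[of "l+1"] A[of l] Cn Sv_nonneg
    by (intro mult_left_mono add_mono mult_mono) (auto simp: cI_def)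
  also have "\<dots> = Sv p q n1 l"
    using Sv_rec[of l] pq by (simp add: field_simps)
  finally show ?case .
qed

lemma S_summable: "(\<lambda>w. P w * cntF n1 l w) summable_on DD"
  using bound_summable[of "\<lambda>w. P w * cntF n1 l w" "Sv p q n1 l"] S_bound P_nonneg cntF_nonneg by auto

lemma S_rec:
  defines "S \<equiv> \<lambda>l. infsum (\<lambda>w. P w * cntF n1 l w) DD"
  shows "S l = q * S (l+1) + q * cI n1 l / p + q * S l"
proof -
  have hS: "((\<lambda>w. P w * cntF n1 l w) has_sum S l) DD" for l
    unfolding S_def using S_summable by (rule has_sum_infsum)
  have "S l - P [] * cntF n1 l [] = (q*p*S (l+1)) * (1/p) + (q*p*cI n1 l*(1/p)) * (1/p) + (q*p*(1/p)) * S l"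
    unfolding S_def
    by (rule lin_decomp3[OF S_summable has_sum_cmult_right[OF hS[of "l+1"], of "q*p", unfolded S_def]
         P_has_sum has_sum_cmult_right[OF P_has_sum, of "q*p*cI n1 l"] P_has_sum
         has_sum_cmult_right[OF P_has_sum, of "q*p"] hS[of l, unfolded S_def]])
       (use pq P_nonneg cntF_nonneg in \<open>auto simp: DD_def dec_def cntF_app P_dec[unfolded dec_def] cI_def algebra_simps\<close>)
  then show ?thesis using pq by (simp add: field_simps)
qed

lemma S_val: "((\<lambda>w. P w * cntF n1 l w) has_sum Sv p q n1 l) DD"
proof -
  define S where "S = (\<lambda>l. infsum (\<lambda>w. P w * cntF n1 l w) DD)"
  have rec: "S l = q * S (l+1) + q * cI n1 l / p + q * S l" for l
    unfolding S_def by (rule S_rec)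
  have zero: "S l = Sv p q n1 l" if "int n1 \<le> l" for l
  proof -
    have "S l = infsum (\<lambda>w. 0) DD"
      unfolding S_def by (rule infsum_cong) (use that cntF_zero in \<open>auto simp: DD_def\<close>)
    moreover have "nat (int n1 - l) = 0" using that by simp
    ultimately show ?thesis by (simp add: Sv_def)
  qed
  have down: "S (int n1 - int k) = Sv p q n1 (int n1 - int k)" for k
  proof (induction k)
    case 0 then show ?case using zero by simp
  next
    case (Suc k)
    define l where "l = int n1 - int (Suc k)"
    have l1: "l + 1 = int n1 - int k" unfolding l_def by simp
    have pS: "p * x = x - q * x" for x
    proof -
      have "p * x = (p + q) * x - q * x" by (simp add: algebra_simps)
      then show ?thesis using pq(3) by simp
    qed
    have "p * S l = q * S (l+1) + q * cI n1 l / p" using rec[of l] pS[of "S l"] by linarith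
    moreover have "p * Sv p q n1 l = q * Sv p q n1 (l+1) + q * cI n1 l / p"
      using Sv_rec[of l] pS[of "Sv p q n1 l"] by linarith
    ultimately have "p * S l = p * Sv p q n1 l" using Suc l1 by simp
    then show ?case using pq unfolding l_def by simp
  qed
  have "S l = Sv p q n1 l"
  proof (cases "int n1 \<le> l")
    case True then show ?thesis by (rule zero)
  next
    case False
    then have "l = int n1 - int (nat (int n1 - l))" by simp
    then show ?thesis using down by metis
  qed
  then show ?thesis using S_summable[of l] unfolding S_def by (metis has_sum_infsum)
qed

lemma E_summable: "(\<lambda>w. P w * fF n1 l w) summable_on DD"
proof -
  have "sum (\<lambda>w. P w * fF n1 l w) (Dn n) \<le> 1/p" for n
  proof -
    have "sum (\<lambda>w. P w * fF n1 l w) (Dn n) \<le> sum P (Dn n)"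
      by (intro sum_mono) (use P_nonneg fF_le1 in \<open>auto intro: mult_left_le\<close>)
    then show ?thesis using sumP_bound[of n] by linarith
  qed
  then show ?thesis
    using bound_summable[of "\<lambda>w. P w * fF n1 l w" "1/p"] P_nonneg fF_nonneg by auto
qed

lemma E_rec:
  defines "E \<equiv> \<lambda>l. infsum (\<lambda>w. P w * fF n1 l w) DD"
  shows "E l = q * E (l+1) + q * cI n1 l"
proof -
  have hE: "((\<lambda>w. P w * fF n1 l w) has_sum E l) DD" for l
    unfolding E_def using E_summable by (rule has_sum_infsum)
  have "E l - P [] * fF n1 l [] = (q*p*E (l+1)) * (1/p) + (q*p*cI n1 l*1) * (1/p) + 0 * 0"
    unfolding E_def
    by (rule lin_decomp3[OF E_summable has_sum_cmult_right[OF hE[of "l+1"], of "q*p", unfolded E_def]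
         P_has_sum has_sum_cmult_right[OF has_sum_Nil_ind[of 1], of "q*p*cI n1 l"] P_has_sum
         has_sum_0 has_sum_0])
       (use pq P_nonneg fF_nonneg in \<open>auto simp: DD_def dec_def fF_app P_Nil P_dec[unfolded dec_def] cI_def algebra_simps\<close>)
  then show ?thesis using pq by (simp add: field_simps)
qed

lemma E_val: "((\<lambda>w. P w * fF n1 l w) has_sum Ev p q n1 l) DD"
proof -
  define E where "E = (\<lambda>l. infsum (\<lambda>w. P w * fF n1 l w) DD)"
  have rec: "E l = q * E (l+1) + q * cI n1 l" for l
    unfolding E_def by (rule E_rec)
  have zero: "E l = Ev p q n1 l" if "int n1 < l" for l
  proof -
    have "E l = infsum (\<lambda>w. 0) DD"
      unfolding E_def by (rule infsum_cong) (use that fF_zero in auto)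
    moreover have "nat (int n1 - l) = 0" using that by simp
    ultimately show ?thesis by (simp add: Ev_def)
  qed
  have down: "E (int n1 + 1 - int k) = Ev p q n1 (int n1 + 1 - int k)" for k
  proof (induction k)
    case 0 then show ?case using zero by simp
  next
    case (Suc k)
    define l where "l = int n1 + 1 - int (Suc k)"
    have l1: "l + 1 = int n1 + 1 - int k" unfolding l_def by simp
    have "E l = Ev p q n1 l" using rec[of l] Ev_rec[of l] Suc l1 by simp
    then show ?case unfolding l_def by simp
  qed
  have "E l = Ev p q n1 l"
  proof (cases "int n1 < l")
    case True then show ?thesis by (rule zero)
  next
    case False
    then have "l = int n1 + 1 - int (nat (int n1 + 1 - l))" by simp
    then show ?thesis using down by metis
  qed
  then show ?thesis using E_summable[of l] unfolding E_def by (metis has_sum_infsum)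
qed

end




lemma TFF_n: "nS [True, False, False] = 1" "nH [True, False, False] = 2"
  by (simp_all add: nS_def nH_def)

lemma cb_TFF: "cycle_blocks [True, False, False] = {Blk True 1, Blk False 1, Blk False 2}"
  by (auto simp: cycle_blocks_def TFF_n)

lemma mt_TFF: "mined_time [True, False, False] (Blk True 1) = 0"
  "mined_time [True, False, False] (Blk False 1) = 1"
  "mined_time [True, False, False] (Blk False 2) = 2"
  by (rule mined_time_eq; simp add: cnt_def)+

lemma parent_1[simp]: "blk_parent g (Blk b (Suc 0)) = Base" by (cases b) auto

lemma mt_TFF': "mined_time [True, False, False] (Blk True (Suc 0)) = 0"
  "mined_time [True, False, False] (Blk False (Suc 0)) = 1"
  using mt_TFF by simp_all

lemma wt_TFF: "win_tip [True, False, False] = Blk False 2" by (simp add: win_tip_def TFF_n)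

lemma pow_TFF: "(blk_parent g ^^ n) (Blk False 2) = (if n = 0 then Blk False 2 else if n = 1 then Blk (g!1) 1 else Base)"
  by (induction n) auto

lemma official_TFF: "official [True, False, False] g b \<longleftrightarrow> b = Blk False 2 \<or> b = Blk (g!1) 1 \<or> b = Base"
proof -
  have wt: "win_tip [True, False, False] = Blk False 2" by (simp add: win_tip_def TFF_n)
  show ?thesis unfolding official_iff wt pow_TFF
    by (auto intro: exI[of _ 0] exI[of _ 1] exI[of _ 2])
qed

lemma ur_TFF: "1 \<le> n1 \<Longrightarrow> uncles_referred n1 [True, False, False] g = 1"
proof -
  assume n1: "1 \<le> n1"
  have "{b \<in> cycle_blocks [True, False, False]. is_referred n1 [True, False, False] g b}
      = {if g!1 then Blk False 1 else Blk True 1}"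
    using n1 by (cases "g!1") (auto simp: cb_TFF is_referred_def is_uncle_def official_TFF mt_TFF mt_TFF' wt_TFF TFF_n simp del: mined_time.simps)
  then show ?thesis by (simp add: uncles_referred_def)
qed

lemma ur_F: "uncles_referred n1 [False] g = 0"
proof -
  have wt: "win_tip [False] = Blk False 1" by (simp add: win_tip_def nS_def nH_def)
  have "official [False] g (Blk False 1)" unfolding official_iff wt by (auto intro: exI[of _ 0])
  moreover have "cycle_blocks [False] = {Blk False 1}" by (auto simp: cycle_blocks_def nS_def nH_def)
  ultimately have e: "{b \<in> cycle_blocks [False]. is_referred n1 [False] g b} = {}"
    by (auto simp: is_referred_def is_uncle_def)
  show ?thesis unfolding uncles_referred_def e by simp
qed



lemma final_alg:
  fixes p q \<gamma> :: real and n1 :: nat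
  assumes "0 < q" "q < p" "p + q = 1" "2 \<le> n1"
  shows "0 + (q^2*p*1 + (q*p^2*1 + ((q^2*p*\<gamma>) * Sv p q n1 2 + (q^2*p*\<gamma>) * (1/p) + (q^2*p*(1-\<gamma>)) * 1
      + (q^2*p*(1-\<gamma>)) * Ev p q n1 2)))
    = q + q ^ 3 * \<gamma> / (p - q) - p ^ 3 / (p - q) * (q / p) ^ (n1 + 1) * \<gamma> - q ^ (n1 + 1) * (1 - \<gamma>)"
proof -
  obtain m where m: "n1 = m + 2" using assms(4) by (metis add.commute le_Suc_ex)
  have nm: "nat (int n1 - 2) = m" using m by simp
  define x where "x = (q/p)^m"
  define y where "y = q^m"
  have e1: "(q / p) ^ (n1 + 1) = x * (q^3/p^3)" unfolding x_def m by (simp add: power_add power_divide power3_eq_cube mult_ac)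
  have e2: "q ^ (n1 + 1) = y * q^3" unfolding y_def m by (simp add: power_add power3_eq_cube)
  have Sv2: "Sv p q n1 2 = q / (p * (p - q)) * (1 - x)" unfolding Sv_def nm x_def by simp
  have Ev2: "Ev p q n1 2 = q * (1 - y) / p" unfolding Ev_def nm y_def by simp
  have pne: "p \<noteq> 0" "p - q \<noteq> 0" using assms by auto
  have A: "q^2*p*1 + q*p^2*1 = q*p" using assms(3)
    by (simp add: power2_eq_square algebra_simps) (metis distrib_left mult.commute mult_1)
  have B1: "p^3/(p-q) * (x * (q^3/p^3)) * \<gamma> = x*q^3*\<gamma>/(p-q)" using pne by (simp add: field_simps)
  have B2: "(q^2*p*\<gamma>) * (q / (p * (p - q)) * (1 - x)) = q^3*\<gamma>*(1-x)/(p-q)"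
    using pne by (simp add: field_simps power2_eq_square power3_eq_cube)
  have B3: "q^3*\<gamma>*(1-x)/(p-q) = q^3*\<gamma>/(p-q) - x*q^3*\<gamma>/(p-q)"
    by (simp add: diff_divide_distrib[symmetric] algebra_simps)
  have B: "(q^2*p*\<gamma>) * (q / (p * (p - q)) * (1 - x)) = q^3*\<gamma>/(p-q) - p^3/(p-q) * (x * (q^3/p^3)) * \<gamma>"
    unfolding B1 B2 B3 ..
  have C: "(q^2*p*\<gamma>) * (1/p) + (q^2*p*(1-\<gamma>)) * 1 + (q^2*p*(1-\<gamma>)) * (q * (1 - y) / p)
     = q^2 - y*q^3*(1-\<gamma>)"
  proof -
    have "(q^2*p*\<gamma>) * (1/p) + (q^2*p*(1-\<gamma>)) * 1 + (q^2*p*(1-\<gamma>)) * (q * (1 - y) / p)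
       = q^2*\<gamma> + q^2*(1-\<gamma>)*(p + q) - y*q^3*(1-\<gamma>)"
      using pne by (simp add: field_simps power3_eq_cube power2_eq_square)
    then show ?thesis using assms(3) by (simp add: algebra_simps)
  qed
  have D: "q*p + q^2 = q" using assms(3)
    by (simp add: power2_eq_square) (metis distrib_left mult.right_neutral)
  show ?thesis unfolding e1 e2 Sv2 Ev2 using A B C D by (simp add: algebra_simps)
qed


definition TTF :: "bool list \<Rightarrow> bool list" where "TTF w = True # True # w @ [False]"

lemma Cyc_eq: "{\<omega>. is_cycle \<omega>} = insert [False] (insert [True, False, True] (insert [True, False, False] (TTF ` DD)))"
  by (auto simp: is_cycle_def TTF_def DD_def)

lemma inj_TTF: "inj_on TTF DD" by (auto simp: inj_on_def TTF_def)

theorem proposition7: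
  fixes p q \<gamma> :: real and n1 :: nat
  assumes "0 < q" and "q < p" and "p + q = 1" and "0 \<le> \<gamma>" and "\<gamma> \<le> 1" and "2 \<le> n1"
  shows "((\<lambda>(\<omega>, g). cycle_prob p q \<omega> * flags_prob \<gamma> g * real (uncles_referred n1 \<omega> g))
           has_sum (q + q ^ 3 * \<gamma> / (p - q) - p ^ 3 / (p - q) * (q / p) ^ (n1 + 1) * \<gamma>
                    - q ^ (n1 + 1) * (1 - \<gamma>))) cycle_outcomes"
proof -
  note pq = assms(1-3)
  define V where "V \<omega> = (\<Sum>g | length g = nH \<omega>. flags_prob \<gamma> g * real (uncles_referred n1 \<omega> g))" for \<omega>
  define \<Phi> where "\<Phi> \<omega> = cycle_prob p q \<omega> * V \<omega>" for \<omega>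
  define Tot where "Tot = q + q ^ 3 * \<gamma> / (p - q) - p ^ 3 / (p - q) * (q / p) ^ (n1 + 1) * \<gamma>
                    - q ^ (n1 + 1) * (1 - \<gamma>)"
  have n1: "1 \<le> n1" using assms(6) by simp
  have VF: "V [False] = 0" unfolding V_def ur_F by simp
  have VTFT: "V [True, False, True] = 1"
  proof -
    have "nH [True, False, True] < nS [True, False, True]" by (simp add: nS_def nH_def)
    then have "V [True, False, True] = cw n1 \<gamma> 0 True [True, False, True]"
      unfolding V_def by (rule V_AW[OF _ n1])
    then show ?thesis using n1 by simp
  qed
  have VTFF: "V [True, False, False] = 1" unfolding V_def ur_TFF[OF n1] using FP1 by simp
  have VTTF: "V (TTF w) = \<gamma> * (cntF n1 2 w + 1) + (1 - \<gamma>) * ((if w = [] then 1 else 0) + fF n1 2 w)"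
    if "w \<in> DD" for w
  proof -
    have d: "dyck w" using that by (simp add: DD_def)
    have "V (TTF w) = cw n1 \<gamma> 0 True (TTF w)"
      unfolding V_def by (rule V_AW[OF _ n1]) (simp add: TTF_def AW_TT[OF d])
    then show ?thesis unfolding TTF_def using V_TT[OF d assms(6)] by simp
  qed
  define X where "X = (q^2*p*\<gamma>) * Sv p q n1 2 + (q^2*p*\<gamma>) * (1/p) + (q^2*p*(1-\<gamma>)) * 1
      + (q^2*p*(1-\<gamma>)) * Ev p q n1 2"
  have hX: "((\<lambda>w. \<Phi> (TTF w)) has_sum X) DD"
  proof -
    have "((\<lambda>w. (q^2*p*\<gamma>) * (cycle_prob p q w * cntF n1 2 w) + (q^2*p*\<gamma>) * cycle_prob p q w
       + (q^2*p*(1-\<gamma>)) * (if w = [] then 1 else 0) + (q^2*p*(1-\<gamma>)) * (cycle_prob p q w * fF n1 2 w))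
       has_sum X) DD"
      unfolding X_def
      by (intro has_sum_add has_sum_cmult_right S_val[OF pq] P_has_sum[OF pq] has_sum_Nil_ind E_val[OF pq])
    then show ?thesis
    proof (rule has_sum_cong[THEN iffD1, rotated])
      fix w assume w: "w \<in> DD"
      show "(q^2*p*\<gamma>) * (cycle_prob p q w * cntF n1 2 w) + (q^2*p*\<gamma>) * cycle_prob p q w
       + (q^2*p*(1-\<gamma>)) * (if w = [] then 1 else 0) + (q^2*p*(1-\<gamma>)) * (cycle_prob p q w * fF n1 2 w)
       = \<Phi> (TTF w)"
        unfolding \<Phi>_def VTTF[OF w] using P_Nil[OF pq]
        by (simp add: TTF_def cp_TT algebra_simps)
    qed
  qed
  have hC: "(\<Phi> has_sum (\<Phi> [False] + (\<Phi> [True, False, True] + (\<Phi> [True, False, False] + X))))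
      {\<omega>. is_cycle \<omega>}"
    unfolding Cyc_eq
    by (intro has_sum_insert) (use hX has_sum_reindex[OF inj_TTF, of \<Phi> X] in
        \<open>auto simp: TTF_def o_def\<close>)
  have tot: "\<Phi> [False] + (\<Phi> [True, False, True] + (\<Phi> [True, False, False] + X)) = Tot"
    unfolding \<Phi>_def VF VTFT VTFF X_def Tot_def
    using final_alg[OF assms(1-3,6), of \<gamma>]
    by (simp add: cycle_prob_def nS_def nH_def power2_eq_square)
  have CO: "cycle_outcomes = Sigma {\<omega>. is_cycle \<omega>} (\<lambda>\<omega>. {g. length g = nH \<omega>})"
    by (auto simp: cycle_outcomes_def)
  let ?f = "\<lambda>(\<omega>, g). cycle_prob p q \<omega> * flags_prob \<gamma> g * real (uncles_referred n1 \<omega> g)"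
  have inner: "((\<lambda>g. ?f (\<omega>, g)) has_sum \<Phi> \<omega>) {g. length g = nH \<omega>}" for \<omega>
  proof -
    have "\<Phi> \<omega> = (\<Sum>g | length g = nH \<omega>. ?f (\<omega>, g))"
      unfolding \<Phi>_def V_def by (simp add: sum_distrib_left mult.assoc)
    then show ?thesis using finite_lists_len by (simp add: has_sum_finite_iff)
  qed
  have nn: "0 \<le> ?f (\<omega>, g)" for \<omega> g
    using P_nonneg[OF pq] flags_prob_nonneg[OF assms(4,5)] by simp
  have summ: "?f summable_on Sigma {\<omega>. is_cycle \<omega>} (\<lambda>\<omega>. {g. length g = nH \<omega>})"
    by (rule summable_on_SigmaI[OF inner]) (use hC nn in \<open>auto simp: summable_on_def\<close>)
  have "(?f has_sum Tot) (Sigma {\<omega>. is_cycle \<omega>} (\<lambda>\<omega>. {g. length g = nH \<omega>}))"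
    by (rule has_sum_SigmaI[OF inner _ summ]) (use hC tot in simp)
  then show ?thesis unfolding CO Tot_def .
qed


end
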